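(* Given $n\ge 2$, an integer $1\le v_0<n$ and elements $\{p_v\}_{v_0\le v<n}$ of $K$ with $p_{v_0}=1$, there exists a cycle coalgebra $(C,\mathfrak p)$ such that $\mathfrak p_{1v}^1=\delta_{0v}$ for $0\le v<v_0$ and $\mathfrak p_{1v}^1=p_v$ for $v_0\le v<n$.
   Context: $K$ is an algebraically closed field of characteristic $0$ and $n\ge2$. $C$ is the coalgebra dual to $K[y]/\langle y^n\rangle$: basis $x_0,\dots,x_{n-1}$ (dual to $1,y,\dots,y^{n-1}$), $\Delta(x_i)=\sum_{j+k=i}x_j\otimes x_k$, $\epsilon(x_i)=\delta_{i0}$; $C\otimes C$ has the tensor product coalgebra structure; Sweedler notation $\Delta(b)=b_{(1)}\otimes b_{(2)}$. For linear maps $\mathfrak p,\mathfrak d\colon C\otimes C\to C$ write $a\cdot b=\mathfrak p(a\otimes b)$, $a:b=\mathfrak d(a\otimes b)$, and $\mathfrak p(x_i\otimes x_j)=\sum_{k=0}^{n-1}\mathfrak p_{ij}^kx_k$, $\mathfrak d(x_i\otimes x_j)=\sum_{k=0}^{n-1}\mathfrak d_{ij}^kx_k$. A triple $(C,\mathfrak p,\mathfrak d)$ with $\mathfrak p,\mathfrak d$ coalgebra morphisms is a regular $q$-magma coalgebra if there are coalgebra morphisms $C\otimes C\to C$, $a\otimes b\mapsto a^b$ and $a\otimes b\mapsto a_b$, with $a^{b_{(1)}}\cdot b_{(2)}=(a\cdot b_{(1)})^{b_{(2)}}=\epsilon(b)a$ and $(a:b_{(2)})_{b_{(1)}}=a_{b_{(2)}}:b_{(1)}=\epsilon(b)a$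 for all $a,b$. It is a regular $q$-cycle coalgebra if moreover for all $a,b,c\in C$: (1) $(a\cdot b_{(1)})\cdot(c:b_{(2)})=(a\cdot c_{(2)})\cdot(b\cdot c_{(1)})$; (2) $(a\cdot b_{(1)}):(c\cdot b_{(2)})=(a:c_{(2)})\cdot(b:c_{(1)})$; (3) $(a:b_{(1)}):(c:b_{(2)})=(a:c_{(2)}):(b\cdot c_{(1)})$. A cycle coalgebra is a pair $(C,\mathfrak p)$ such that $(C,\mathfrak p,\mathfrak p)$ is a regular $q$-cycle coalgebra. *)

theory Defs
  imports "HOL-Computational_Algebra.Polynomial"
begin

definition alg_closed_field :: "'a::field itself \<Rightarrow> bool" where
  "alg_closed_field _ \<longleftrightarrow> (\<forall>q :: 'a poly. degree q \<ge> 1 \<longrightarrow> (\<exists>x. poly q x = 0))"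

text \<open>Elements of C are coordinate functions w.r.t. the basis x_0,...,x_(n-1)
  (only indices below n matter).  A linear map C \<otimes> C \<rightarrow> C is given by its structure
  constants f i j k = f_ij^k, i.e. f(x_i \<otimes> x_j) = sum_k f_ij^k x_k.\<close>
type_synonym 'a elt = "nat \<Rightarrow> 'a"
type_synonym 'a bilin = "nat \<Rightarrow> nat \<Rightarrow> nat \<Rightarrow> 'a"

definition bx :: "nat \<Rightarrow> 'a::zero_neq_one elt" where
  "bx i = (\<lambda>k. if k = i then 1 else 0)"

definition app :: "nat \<Rightarrow> 'a::comm_ring_1 bilin \<Rightarrow> 'a elt \<Rightarrow> 'a elt \<Rightarrow> 'a elt" where
  "app n f a b = (\<lambda>k. if k < n then (\<Sum>i<n. \<Sum>j<n. a i * b j * f i j k) else 0)"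

definition cou :: "'a elt \<Rightarrow> 'a" where
  "cou a = a 0"

text \<open>Sweedler sum: for F bilinear, sweedler n F b = F(b_(1), b_(2)),
  using \<Delta>(x_j) = sum_{s+t=j} x_s \<otimes> x_t.\<close>
definition sweedler :: "nat \<Rightarrow> ('a::comm_ring_1 elt \<Rightarrow> 'a elt \<Rightarrow> 'a elt) \<Rightarrow> 'a elt \<Rightarrow> 'a elt" where
  "sweedler n F b = (\<lambda>k. \<Sum>j<n. b j * (\<Sum>s\<le>j. F (bx s) (bx (j - s)) k))"

definition eqC :: "nat \<Rightarrow> 'a elt \<Rightarrow> 'a elt \<Rightarrow> bool" where
  "eqC n u w \<longleftrightarrow> (\<forall>k<n. u k = w k)"

definition smul :: "'a::times \<Rightarrow> 'a elt \<Rightarrow> 'a elt" where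
  "smul c a = (\<lambda>k. c * a k)"

text \<open>f : C \<otimes> C \<rightarrow> C is a coalgebra morphism (C \<otimes> C with the tensor product coalgebra
  structure): \<Delta> \<circ> f = (f \<otimes> f) \<circ> \<Delta> and \<epsilon> \<circ> f = \<epsilon>, written out on the basis
  x_i \<otimes> x_j, comparing coefficients of x_s \<otimes> x_t.\<close>
definition coalg_mor :: "nat \<Rightarrow> 'a::comm_ring_1 bilin \<Rightarrow> bool" where
  "coalg_mor n f \<longleftrightarrow>
     (\<forall>i<n. \<forall>j<n. \<forall>s<n. \<forall>t<n.
        (if s + t < n then f i j (s + t) else 0) =
        (\<Sum>a\<le>i. \<Sum>c\<le>j. f a c s * f (i - a) (j - c) t)) \<and>
     (\<forall>i<n. \<forall>j<n. f i j 0 = (if i = 0 \<and> j = 0 then 1 else 0))"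

definition regular_q_magma :: "nat \<Rightarrow> 'a::comm_ring_1 bilin \<Rightarrow> 'a bilin \<Rightarrow> bool" where
  "regular_q_magma n p d \<longleftrightarrow> coalg_mor n p \<and> coalg_mor n d \<and>
     (\<exists>up lo. coalg_mor n up \<and> coalg_mor n lo \<and>
       (\<forall>a b.
          eqC n (sweedler n (\<lambda>b1 b2. app n p (app n up a b1) b2) b) (smul (cou b) a) \<and>
          eqC n (sweedler n (\<lambda>b1 b2. app n up (app n p a b1) b2) b) (smul (cou b) a) \<and>
          eqC n (sweedler n (\<lambda>b1 b2. app n lo (app n d a b2) b1) b) (smul (cou b) a) \<and>
          eqC n (sweedler n (\<lambda>b1 b2. app n d (app n lo a b2) b1) b) (smul (cou b) a)))"

definition regular_q_cycle :: "nat \<Rightarrow> 'a::comm_ring_1 bilin \<Rightarrow> 'a bilin \<Rightarrow> bool" where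
  "regular_q_cycle n p d \<longleftrightarrow> regular_q_magma n p d \<and>
     (\<forall>a b c.
        eqC n (sweedler n (\<lambda>b1 b2. app n p (app n p a b1) (app n d c b2)) b)
              (sweedler n (\<lambda>c1 c2. app n p (app n p a c2) (app n p b c1)) c) \<and>
        eqC n (sweedler n (\<lambda>b1 b2. app n d (app n p a b1) (app n p c b2)) b)
              (sweedler n (\<lambda>c1 c2. app n p (app n d a c2) (app n d b c1)) c) \<and>
        eqC n (sweedler n (\<lambda>b1 b2. app n d (app n d a b1) (app n d c b2)) b)
              (sweedler n (\<lambda>c1 c2. app n d (app n d a c2) (app n p b c1)) c))"

definition cycle_coalgebra :: "nat \<Rightarrow> 'a::comm_ring_1 bilin \<Rightarrow> bool" where
  "cycle_coalgebra n p \<longleftrightarrow> regular_q_cycle n p p"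

end

theory Submission
  imports Defs "HOL-Computational_Algebra.Formal_Power_Series"
begin


definition dd :: "nat \<Rightarrow> 'a::field_char_0 \<Rightarrow> nat \<Rightarrow> 'a" where
  "dd m r q = (- of_nat m) ^ q * ((- r / of_nat m) gchoose q)"

definition cc :: "nat \<Rightarrow> 'a::field_char_0 \<Rightarrow> nat \<Rightarrow> 'a" where
  "cc m r j = (if m dvd j then dd m r (j div m) else 0)"

lemma dd_vdm:
  assumes "m > 0"
  shows "(\<Sum>q\<le>J. dd m r q * dd m r' (J - q)) = dd m (r + r') J"
proof -
  have "(\<Sum>q\<le>J. dd m r q * dd m r' (J - q)) =
        (\<Sum>q=0..J. (- of_nat m) ^ J * (((- r / of_nat m) gchoose q) * ((- r' / of_nat m) gchoose (J - q))))"
    by (rule sum.cong) (auto simp: dd_def power_add[symmetric])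
  also have "\<dots> = (- of_nat m) ^ J * ((- r / of_nat m + - r' / of_nat m) gchoose J)"
    by (simp add: sum_distrib_left[symmetric] gbinomial_Vandermonde)
  also have "- r / of_nat m + - r' / of_nat m = - (r + r') / (of_nat m :: 'a)"
    using assms by (simp add: field_simps)
  finally show ?thesis by (simp add: dd_def)
qed

lemma dd_poch: "m > 0 \<Longrightarrow> dd m r q = of_nat m ^ q * pochhammer (r / of_nat m) q / fact q"
  by (simp add: dd_def gbinomial_pochhammer power_mult_distrib[symmetric])

lemma dd_sym:
  fixes r :: "'a::field_char_0"
  assumes "m > 0"
  shows "dd m r L * dd m (r + of_nat m * of_nat L) J
       = dd m r J * dd m (r + of_nat m * of_nat J) L"
proof -
  have e: "(r + of_nat m * of_nat L) / of_nat m = r / of_nat m + of_nat L" for L :: nat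
    using assms by (simp add: field_simps)
  have p: "pochhammer (r / of_nat m) L * pochhammer (r / of_nat m + of_nat L) J
     = pochhammer (r / of_nat m) (L + J)" for L J
    by (simp add: pochhammer_product')
  have "dd m r L * dd m (r + of_nat m * of_nat L) J
      = of_nat m ^ (L + J) * (pochhammer (r / of_nat m) L * pochhammer (r / of_nat m + of_nat L) J) / (fact L * fact J)"
    unfolding dd_poch[OF assms] e by (simp add: power_add)
  also have "\<dots> = of_nat m ^ (J + L) * (pochhammer (r / of_nat m) J * pochhammer (r / of_nat m + of_nat J) L) / (fact J * fact L)"
    unfolding p by (simp add: add.commute mult.commute)
  also have "\<dots> = dd m r J * dd m (r + of_nat m * of_nat J) L"
    unfolding dd_poch[OF assms] e by (simp add: power_add)
  finally show ?thesis .
qed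

lemma cc_vdm:
  assumes m: "m > 0"
  shows "(\<Sum>c\<le>j. cc m r c * cc m r' (j - c)) = cc m (r + r') j"
proof (cases "m dvd j")
  case True
  then obtain J where J: "j = m * J" by blast
  have "(\<Sum>c\<le>j. cc m r c * cc m r' (j - c)) = (\<Sum>c\<in>(\<lambda>q. m * q) ` {..J}. cc m r c * cc m r' (j - c))"
  proof (rule sum.mono_neutral_right)
    show "(\<lambda>q. m * q) ` {..J} \<subseteq> {..j}" using J by auto
    show "\<forall>i\<in>{..j} - (\<lambda>q. m * q) ` {..J}. cc m r i * cc m r' (j - i) = 0"
    proof
      fix i assume i: "i \<in> {..j} - (\<lambda>q. m * q) ` {..J}"
      have "\<not> m dvd i"
      proof
        assume "m dvd i" then obtain q where "i = m * q" by blast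
        with i J m show False by auto
      qed
      then show "cc m r i * cc m r' (j - i) = 0" by (simp add: cc_def)
    qed
  qed simp
  also have "\<dots> = (\<Sum>q\<le>J. cc m r (m * q) * cc m r' (j - m * q))"
    using m by (subst sum.reindex) (auto simp: inj_on_def)
  also have "\<dots> = (\<Sum>q\<le>J. dd m r q * dd m r' (J - q))"
  proof (rule sum.cong)
    fix q assume "q \<in> {..J}"
    then have "j - m * q = m * (J - q)" using J by (simp add: diff_mult_distrib2)
    then show "cc m r (m * q) * cc m r' (j - m * q) = dd m r q * dd m r' (J - q)"
      using m by (simp add: cc_def)
  qed simp
  also have "\<dots> = dd m (r + r') J" by (rule dd_vdm[OF m])
  also have "\<dots> = cc m (r + r') j" using J m by (simp add: cc_def)
  finally show ?thesis .
next
  case False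
  have "cc m r c * cc m r' (j - c) = 0" if "c \<le> j" for c
  proof -
    have "\<not> (m dvd c \<and> m dvd (j - c))"
    proof
      assume "m dvd c \<and> m dvd (j - c)"
      then have "m dvd (c + (j - c))" by (simp add: dvd_add)
      with that False show False by simp
    qed
    then show ?thesis by (auto simp: cc_def)
  qed
  then have "(\<Sum>c\<le>j. cc m r c * cc m r' (j - c)) = 0" by (intro sum.neutral) auto
  then show ?thesis using False by (simp add: cc_def)
qed

lemma cc_sym:
  fixes r :: "'a::field_char_0"
  assumes m: "m > 0"
  shows "cc m r l * cc m (r + of_nat l) j = cc m r j * cc m (r + of_nat j) l"
proof (cases "m dvd l \<and> m dvd j")
  case True
  then obtain L J where LJ: "l = m * L" "j = m * J" by blast
  show ?thesis using m dd_sym[OF m, of r L J] by (simp add: cc_def LJ)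
next
  case False then show ?thesis by (auto simp: cc_def)
qed

lemma cc_0 [simp]: "m > 0 \<Longrightarrow> cc m 0 j = (if j = 0 then 1 else 0)"
  by (auto simp: cc_def dd_def gbinomial_0_left elim!: dvdE)

lemma cc_at0 [simp]: "cc m r 0 = 1"
  by (simp add: cc_def dd_def)



lemma tri:
  fixes X :: "nat \<Rightarrow> nat \<Rightarrow> 'a::comm_monoid_add"
  shows "(\<Sum>u<n. \<Sum>w<n. (if u + w < n then X u w else 0)) = (\<Sum>q<n. \<Sum>u\<le>q. X u (q - u))"
proof -
  have "(\<Sum>u<n. \<Sum>w<n. (if u + w < n then X u w else 0)) = (\<Sum>(u,w)\<in>{..<n}\<times>{..<n}. (if u + w < n then X u w else 0))"
    by (simp add: sum.cartesian_product)
  also have "\<dots> = (\<Sum>(u,w)\<in>{(u,w). u + w < n}. X u w)"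
    by (rule sum.mono_neutral_cong_right) (auto split: if_splits)
  also have "\<dots> = (\<Sum>q<n. \<Sum>u\<le>q. X u (q - u))"
    by (rule sum.triangle_reindex)
  finally show ?thesis .
qed

lemma swap4:
  "(\<Sum>a\<in>A. \<Sum>c\<in>B. \<Sum>r\<in>C. \<Sum>r'\<in>D. f a c r r') = (\<Sum>r\<in>C. \<Sum>r'\<in>D. \<Sum>a\<in>A. \<Sum>c\<in>B. f a c r r')"
proof -
  have "(\<Sum>a\<in>A. \<Sum>c\<in>B. \<Sum>r\<in>C. \<Sum>r'\<in>D. f a c r r') = (\<Sum>a\<in>A. \<Sum>r\<in>C. \<Sum>c\<in>B. \<Sum>r'\<in>D. f a c r r')"
    by (rule sum.cong[OF refl], rule sum.swap)
  also have "\<dots> = (\<Sum>a\<in>A. \<Sum>r\<in>C. \<Sum>r'\<in>D. \<Sum>c\<in>B. f a c r r')"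
    by (rule sum.cong[OF refl], rule sum.cong[OF refl], rule sum.swap)
  also have "\<dots> = (\<Sum>r\<in>C. \<Sum>a\<in>A. \<Sum>r'\<in>D. \<Sum>c\<in>B. f a c r r')"
    by (rule sum.swap)
  also have "\<dots> = (\<Sum>r\<in>C. \<Sum>r'\<in>D. \<Sum>a\<in>A. \<Sum>c\<in>B. f a c r r')"
    by (rule sum.cong[OF refl], rule sum.swap)
  finally show ?thesis .
qed

definition lin :: "nat \<Rightarrow> (nat \<Rightarrow> nat \<Rightarrow> 'a::comm_ring_1) \<Rightarrow> 'a elt \<Rightarrow> 'a elt" where
  "lin n T a = (\<lambda>k. if k < n then (\<Sum>v<n. a v * T v k) else 0)"

definition cmor :: "nat \<Rightarrow> (nat \<Rightarrow> nat \<Rightarrow> 'a::comm_ring_1) \<Rightarrow> bool" where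
  "cmor n T \<longleftrightarrow> (\<forall>q<n. \<forall>s<n. \<forall>t<n. (\<Sum>r\<le>q. T r s * T (q - r) t) = (if s + t < n then T q (s + t) else 0))
     \<and> (\<forall>j<n. T j 0 = (if j = 0 then 1 else 0))"

definition cnj :: "nat \<Rightarrow> (nat \<Rightarrow> nat \<Rightarrow> 'a::comm_ring_1) \<Rightarrow> (nat \<Rightarrow> nat \<Rightarrow> 'a) \<Rightarrow> 'a bilin \<Rightarrow> 'a bilin" where
  "cnj n T S f = (\<lambda>i j k. \<Sum>r<n. (\<Sum>u<n. \<Sum>w<n. T i u * T j w * f u w r) * S r k)"

lemma CM2:
  assumes S: "cmor n S" and f: "coalg_mor n f"
  shows "coalg_mor n (\<lambda>i j k. \<Sum>r<n. f i j r * S r k)"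
proof -
  have fc': "(if s + t < n then f i j (s + t) else 0) = (\<Sum>a\<le>i. \<Sum>c\<le>j. f a c s * f (i - a) (j - c) t)"
    if "i < n" "j < n" "s < n" "t < n" for i j s t
    using f that unfolding coalg_mor_def by blast
  note fc = fc'[symmetric]
  have Sc: "(\<Sum>r\<le>q. S r s * S (q - r) t) = (if s + t < n then S q (s + t) else 0)"
    if "q < n" "s < n" "t < n" for q s t
    using S that unfolding cmor_def by blast
  have S0: "S j 0 = (if j = 0 then 1 else 0)" if "j < n" for j using S that unfolding cmor_def by blast
  have f0: "f i j 0 = (if i = 0 \<and> j = 0 then 1 else 0)" if "i < n" "j < n" for i j
    using f that unfolding coalg_mor_def by blast
  show ?thesis unfolding coalg_mor_def
  proof (intro conjI allI impI)
    fix i j s t assume ijst: "i < n" "j < n" "s < n" "t < n"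
    have "(\<Sum>a\<le>i. \<Sum>c\<le>j. (\<Sum>r<n. f a c r * S r s) * (\<Sum>r<n. f (i - a) (j - c) r * S r t))
       = (\<Sum>r<n. \<Sum>r'<n. S r s * S r' t * (\<Sum>a\<le>i. \<Sum>c\<le>j. f a c r * f (i - a) (j - c) r'))"
    proof -
      have "(\<Sum>a\<le>i. \<Sum>c\<le>j. (\<Sum>r<n. f a c r * S r s) * (\<Sum>r<n. f (i - a) (j - c) r * S r t))
          = (\<Sum>a\<le>i. \<Sum>c\<le>j. \<Sum>r<n. \<Sum>r'<n. S r s * S r' t * (f a c r * f (i - a) (j - c) r'))"
        by (simp add: sum_product mult_ac)
      also have "\<dots> = (\<Sum>r<n. \<Sum>r'<n. \<Sum>a\<le>i. \<Sum>c\<le>j. S r s * S r' t * (f a c r * f (i - a) (j - c) r'))"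
        by (rule swap4)
      also have "\<dots> = (\<Sum>r<n. \<Sum>r'<n. S r s * S r' t * (\<Sum>a\<le>i. \<Sum>c\<le>j. f a c r * f (i - a) (j - c) r'))"
        by (simp add: sum_distrib_left)
      finally show ?thesis .
    qed
    also have "\<dots> = (\<Sum>r<n. \<Sum>r'<n. if r + r' < n then S r s * S r' t * f i j (r + r') else 0)"
      using ijst by (intro sum.cong refl) (simp add: fc)
    also have "\<dots> = (\<Sum>q<n. \<Sum>r\<le>q. S r s * S (q - r) t * f i j q)"
      by (subst tri) simp
    also have "\<dots> = (\<Sum>q<n. (if s + t < n then S q (s + t) else 0) * f i j q)"
      using ijst by (intro sum.cong refl) (simp add: sum_distrib_right[symmetric] Sc)
    also have "\<dots> = (if s + t < n then \<Sum>r<n. f i j r * S r (s + t) else 0)"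
      by (simp add: mult.commute)
    finally show "(if s + t < n then \<Sum>r<n. f i j r * S r (s + t) else 0) =
         (\<Sum>a\<le>i. \<Sum>c\<le>j. (\<Sum>r<n. f a c r * S r s) * (\<Sum>r<n. f (i - a) (j - c) r * S r t))" by simp
  next
    fix i j assume ij: "i < n" "j < n"
    have "(\<Sum>r<n. f i j r * S r 0) = (\<Sum>r<n. if r = 0 then f i j 0 else 0)"
      by (intro sum.cong refl) (simp add: S0)
    also have "\<dots> = f i j 0" using ij by simp
    finally show "(\<Sum>r<n. f i j r * S r 0) = (if i = 0 \<and> j = 0 then 1 else 0)" using f0 ij by simp
  qed
qed

lemma CM1a:
  assumes T: "cmor n T" and f: "coalg_mor n f"
  shows "coalg_mor n (\<lambda>i j k. \<Sum>u<n. T i u * f u j k)"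
proof -
  have fc': "(if s + t < n then f i j (s + t) else 0) = (\<Sum>a\<le>i. \<Sum>c\<le>j. f a c s * f (i - a) (j - c) t)"
    if "i < n" "j < n" "s < n" "t < n" for i j s t
    using f that unfolding coalg_mor_def by blast
  note fc = fc'[symmetric]
  have Tc: "(\<Sum>r\<le>q. T r s * T (q - r) t) = (if s + t < n then T q (s + t) else 0)"
    if "q < n" "s < n" "t < n" for q s t
    using T that unfolding cmor_def by blast
  have T0: "T j 0 = (if j = 0 then 1 else 0)" if "j < n" for j using T that unfolding cmor_def by blast
  have f0: "f i j 0 = (if i = 0 \<and> j = 0 then 1 else 0)" if "i < n" "j < n" for i j
    using f that unfolding coalg_mor_def by blast
  show ?thesis unfolding coalg_mor_def
  proof (intro conjI allI impI)
    fix i j s t assume ijst: "i < n" "j < n" "s < n" "t < n"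
    have "(\<Sum>a\<le>i. \<Sum>c\<le>j. (\<Sum>u<n. T a u * f u c s) * (\<Sum>u<n. T (i - a) u * f u (j - c) t))
       = (\<Sum>a\<le>i. \<Sum>c\<le>j. \<Sum>u<n. \<Sum>u'<n. (T a u * T (i - a) u') * (f u c s * f u' (j - c) t))"
      by (simp add: sum_product mult_ac)
    also have "\<dots> = (\<Sum>u<n. \<Sum>u'<n. \<Sum>a\<le>i. \<Sum>c\<le>j. (T a u * T (i - a) u') * (f u c s * f u' (j - c) t))"
      by (rule swap4)
    also have "\<dots> = (\<Sum>u<n. \<Sum>u'<n. (\<Sum>a\<le>i. T a u * T (i - a) u') * (\<Sum>c\<le>j. f u c s * f u' (j - c) t))"
      by (simp add: sum_product)
    also have "\<dots> = (\<Sum>u<n. \<Sum>u'<n. if u + u' < n then T i (u + u') * (\<Sum>c\<le>j. f u c s * f u' (j - c) t) else 0)"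
      using ijst by (intro sum.cong refl) (simp add: Tc)
    also have "\<dots> = (\<Sum>U<n. \<Sum>u\<le>U. T i U * (\<Sum>c\<le>j. f u c s * f (U - u) (j - c) t))"
      by (subst tri) simp
    also have "\<dots> = (\<Sum>U<n. T i U * (if s + t < n then f U j (s + t) else 0))"
      using ijst by (intro sum.cong refl) (simp add: sum_distrib_left[symmetric] fc)
    also have "\<dots> = (if s + t < n then \<Sum>u<n. T i u * f u j (s + t) else 0)"
      by simp
    finally show "(if s + t < n then \<Sum>u<n. T i u * f u j (s + t) else 0) =
         (\<Sum>a\<le>i. \<Sum>c\<le>j. (\<Sum>u<n. T a u * f u c s) * (\<Sum>u<n. T (i - a) u * f u (j - c) t))" by simp
  next
    fix i j assume ij: "i < n" "j < n"
    have "(\<Sum>u<n. T i u * f u j 0) = (\<Sum>u<n. if u = 0 then T i 0 * f 0 j 0 else 0)"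
      using ij by (intro sum.cong refl) (simp add: f0)
    also have "\<dots> = T i 0 * f 0 j 0" using ij by simp
    finally show "(\<Sum>u<n. T i u * f u j 0) = (if i = 0 \<and> j = 0 then 1 else 0)" using f0 T0 ij by simp
  qed
qed

lemma CM1b:
  assumes T: "cmor n T" and f: "coalg_mor n f"
  shows "coalg_mor n (\<lambda>i j k. \<Sum>w<n. T j w * f i w k)"
proof -
  have fc': "(if s + t < n then f i j (s + t) else 0) = (\<Sum>a\<le>i. \<Sum>c\<le>j. f a c s * f (i - a) (j - c) t)"
    if "i < n" "j < n" "s < n" "t < n" for i j s t
    using f that unfolding coalg_mor_def by blast
  note fc = fc'[symmetric]
  have Tc: "(\<Sum>r\<le>q. T r s * T (q - r) t) = (if s + t < n then T q (s + t) else 0)"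
    if "q < n" "s < n" "t < n" for q s t
    using T that unfolding cmor_def by blast
  have T0: "T j 0 = (if j = 0 then 1 else 0)" if "j < n" for j using T that unfolding cmor_def by blast
  have f0: "f i j 0 = (if i = 0 \<and> j = 0 then 1 else 0)" if "i < n" "j < n" for i j
    using f that unfolding coalg_mor_def by blast
  show ?thesis unfolding coalg_mor_def
  proof (intro conjI allI impI)
    fix i j s t assume ijst: "i < n" "j < n" "s < n" "t < n"
    have "(\<Sum>a\<le>i. \<Sum>c\<le>j. (\<Sum>w<n. T c w * f a w s) * (\<Sum>w<n. T (j - c) w * f (i - a) w t))
       = (\<Sum>a\<le>i. \<Sum>c\<le>j. \<Sum>w<n. \<Sum>w'<n. (T c w * T (j - c) w') * (f a w s * f (i - a) w' t))"
      by (simp add: sum_product mult_ac)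
    also have "\<dots> = (\<Sum>w<n. \<Sum>w'<n. \<Sum>a\<le>i. \<Sum>c\<le>j. (T c w * T (j - c) w') * (f a w s * f (i - a) w' t))"
      by (rule swap4)
    also have "\<dots> = (\<Sum>w<n. \<Sum>w'<n. (\<Sum>c\<le>j. T c w * T (j - c) w') * (\<Sum>a\<le>i. f a w s * f (i - a) w' t))"
      by (simp add: sum_product sum.swap[of _ "{..j}" "{..i}"] mult.commute)
    also have "\<dots> = (\<Sum>w<n. \<Sum>w'<n. if w + w' < n then T j (w + w') * (\<Sum>a\<le>i. f a w s * f (i - a) w' t) else 0)"
      using ijst by (intro sum.cong refl) (simp add: Tc)
    also have "\<dots> = (\<Sum>W<n. \<Sum>w\<le>W. T j W * (\<Sum>a\<le>i. f a w s * f (i - a) (W - w) t))"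
      by (subst tri) simp
    also have "\<dots> = (\<Sum>W<n. T j W * (\<Sum>a\<le>i. \<Sum>w\<le>W. f a w s * f (i - a) (W - w) t))"
      by (simp add: sum_distrib_left[symmetric] sum.swap[of _ "{..i}"])
    also have "\<dots> = (\<Sum>W<n. T j W * (if s + t < n then f i W (s + t) else 0))"
      using ijst by (intro sum.cong refl) (simp add: fc)
    also have "\<dots> = (if s + t < n then \<Sum>w<n. T j w * f i w (s + t) else 0)"
      by simp
    finally show "(if s + t < n then \<Sum>w<n. T j w * f i w (s + t) else 0) =
         (\<Sum>a\<le>i. \<Sum>c\<le>j. (\<Sum>w<n. T c w * f a w s) * (\<Sum>w<n. T (j - c) w * f (i - a) w t))" by simp
  next
    fix i j assume ij: "i < n" "j < n"
    have "(\<Sum>w<n. T j w * f i w 0) = (\<Sum>w<n. if w = 0 then T j 0 * f i 0 0 else 0)"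
      using ij by (intro sum.cong refl) (simp add: f0)
    also have "\<dots> = T j 0 * f i 0 0" using ij by simp
    finally show "(\<Sum>w<n. T j w * f i w 0) = (if i = 0 \<and> j = 0 then 1 else 0)" using f0 T0 ij by simp
  qed
qed

lemma conj_mor:
  assumes T: "cmor n T" and S: "cmor n S" and f: "coalg_mor n f"
  shows "coalg_mor n (cnj n T S f)"
proof -
  have "coalg_mor n (\<lambda>i j k. \<Sum>r<n. (\<Sum>u<n. T i u * (\<Sum>w<n. T j w * f u w r)) * S r k)"
    by (rule CM2[OF S CM1a[OF T CM1b[OF T f]]])
  moreover have "(\<lambda>i j k. \<Sum>r<n. (\<Sum>u<n. T i u * (\<Sum>w<n. T j w * f u w r)) * S r k) = cnj n T S f"
    by (simp add: cnj_def sum_distrib_left mult.assoc)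
  ultimately show ?thesis by simp
qed

definition lnr :: "nat \<Rightarrow> ('a::comm_ring_1 elt \<Rightarrow> 'a elt) \<Rightarrow> bool" where
  "lnr n G \<longleftrightarrow> (\<forall>x k. k < n \<longrightarrow> G x k = (\<Sum>i<n. x i * G (bx i) k))"

definition bil :: "nat \<Rightarrow> ('a::comm_ring_1 elt \<Rightarrow> 'a elt \<Rightarrow> 'a elt) \<Rightarrow> bool" where
  "bil n H \<longleftrightarrow> (\<forall>x y k. k < n \<longrightarrow> H x y k = (\<Sum>i<n. \<Sum>j<n. x i * y j * H (bx i) (bx j) k))"

lemma prod3: "(\<Sum>i\<in>A. a i) * (\<Sum>j\<in>B. b j) * (c::'a::comm_ring_1) = (\<Sum>i\<in>A. \<Sum>j\<in>B. a i * b j * c)"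
  by (simp only: sum_product) (simp only: sum_distrib_right)

lemma bx_sym: "bx i k = bx k i"
  by (simp add: bx_def)

lemma bx_sum1: fixes g :: "nat \<Rightarrow> 'a::comm_ring_1" shows "j < n \<Longrightarrow> (\<Sum>l<n. bx j l * g l) = g j"
proof -
  assume j: "j < n"
  have "(\<Sum>l<n. bx j l * g l) = (\<Sum>l<n. if l = j then g l else 0)"
    by (rule sum.cong) (auto simp: bx_def)
  then show ?thesis using j by simp
qed

lemma bx_sum2: fixes g :: "nat \<Rightarrow> 'a::comm_ring_1" shows "j < n \<Longrightarrow> (\<Sum>l<n. g l * bx j l) = g j"
  using bx_sum1[of j n g] by (simp add: mult.commute)

lemma app_bx2: "j < n \<Longrightarrow> k < n \<Longrightarrow> app n f A (bx j) k = (\<Sum>i<n. A i * f i j k)"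
  by (simp add: app_def mult.assoc bx_sum1 sum_distrib_left[symmetric])

lemma app_bx1: "i < n \<Longrightarrow> k < n \<Longrightarrow> app n f (bx i) B k = (\<Sum>j<n. B j * f i j k)"
proof -
  assume ik: "i < n" "k < n"
  have "app n f (bx i) B k = (\<Sum>l<n. bx i l * (\<Sum>j<n. B j * f l j k))"
    using ik by (simp add: app_def mult.assoc sum_distrib_left)
  also have "\<dots> = (\<Sum>j<n. B j * f i j k)" using ik by (simp only: bx_sum1)
  finally show ?thesis .
qed

lemma lnr_app2: "lnr n (app n f A)"
  unfolding lnr_def
proof (intro allI impI)
  fix x k assume k: "(k::nat) < n"
  have "app n f A x k = (\<Sum>i<n. \<Sum>j<n. A i * x j * f i j k)" using k by (simp add: app_def)
  also have "\<dots> = (\<Sum>j<n. \<Sum>i<n. x j * (A i * f i j k))" by (subst sum.swap) (simp add: mult_ac)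
  also have "\<dots> = (\<Sum>j<n. x j * app n f A (bx j) k)" using k by (simp add: app_bx2 sum_distrib_left)
  finally show "app n f A x k = (\<Sum>i<n. x i * app n f A (bx i) k)" .
qed

lemma lnr_app1: "lnr n (\<lambda>x. app n f x B)"
  unfolding lnr_def
proof (intro allI impI)
  fix x k assume k: "(k::nat) < n"
  have "app n f x B k = (\<Sum>i<n. x i * (\<Sum>j<n. B j * f i j k))" using k
    by (simp add: app_def sum_distrib_left mult_ac)
  also have "\<dots> = (\<Sum>i<n. x i * app n f (bx i) B k)" using k by (simp add: app_bx1)
  finally show "app n f x B k = (\<Sum>i<n. x i * app n f (bx i) B k)" .
qed

lemma lnr_id: "lnr n (\<lambda>x. x)"
  unfolding lnr_def by (auto simp: bx_sym[of _ k for k] bx_sum2)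

lemma bil_app:
  assumes G: "lnr n G" and G': "lnr n G'"
  shows "bil n (\<lambda>x y. app n f (G x) (G' y))"
  unfolding bil_def
proof (intro allI impI)
  fix x y k assume k: "(k::nat) < n"
  have "app n f (G x) (G' y) k = (\<Sum>u<n. \<Sum>w<n. (\<Sum>i<n. x i * G (bx i) u) * (\<Sum>j<n. y j * G' (bx j) w) * f u w k)"
    using k G G' unfolding lnr_def by (simp add: app_def)
  also have "\<dots> = (\<Sum>u<n. \<Sum>w<n. \<Sum>i<n. \<Sum>j<n. x i * y j * (G (bx i) u * G' (bx j) w * f u w k))"
    unfolding prod3 by (intro sum.cong refl) (simp add: mult_ac)
  also have "\<dots> = (\<Sum>i<n. \<Sum>j<n. \<Sum>u<n. \<Sum>w<n. x i * y j * (G (bx i) u * G' (bx j) w * f u w k))"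
    by (rule swap4)
  also have "\<dots> = (\<Sum>i<n. \<Sum>j<n. x i * y j * app n f (G (bx i)) (G' (bx j)) k)"
    using k by (simp add: app_def sum_distrib_left)
  finally show "app n f (G x) (G' y) k = (\<Sum>i<n. \<Sum>j<n. x i * y j * app n f (G (bx i)) (G' (bx j)) k)" .
qed

lemma bil_swap: "bil n H \<Longrightarrow> bil n (\<lambda>x y. H y x)"
  unfolding bil_def by (subst sum.swap) (simp add: mult_ac)

lemma lin_bx: "s < n \<Longrightarrow> lin n T (bx s) = (\<lambda>u. if u < n then T s u else 0)"
  by (auto simp: lin_def bx_sum1)

lemma sweedler_T:
  assumes T: "cmor n T" and H: "bil n H" and k: "k < n"
  shows "sweedler n (\<lambda>x y. H (lin n T x) (lin n T y)) b k = sweedler n H (lin n T b) k"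
proof -
  have Tc: "(\<Sum>r\<le>q. T r s * T (q - r) t) = (if s + t < n then T q (s + t) else 0)"
    if "q < n" "s < n" "t < n" for q s t
    using T that unfolding cmor_def by blast
  define h where "h u w = H (bx u) (bx w) k" for u w
  have Hx: "H (lin n T (bx s)) (lin n T (bx t)) k = (\<Sum>u<n. \<Sum>w<n. T s u * T t w * h u w)"
    if "s < n" "t < n" for s t
    using H k that unfolding bil_def h_def by (simp add: lin_bx)
  have "sweedler n (\<lambda>x y. H (lin n T x) (lin n T y)) b k
      = (\<Sum>j<n. b j * (\<Sum>s\<le>j. \<Sum>u<n. \<Sum>w<n. T s u * T (j - s) w * h u w))"
    unfolding sweedler_def by (intro sum.cong refl arg_cong2[where f="(*)"]) (simp add: Hx)
  also have "\<dots> = (\<Sum>j<n. b j * (\<Sum>u<n. \<Sum>w<n. (\<Sum>s\<le>j. T s u * T (j - s) w) * h u w))"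
  proof (rule sum.cong[OF refl], rule arg_cong2[where f="(*)"], rule refl)
    fix j
    have "(\<Sum>s\<le>j. \<Sum>u<n. \<Sum>w<n. T s u * T (j - s) w * h u w) = (\<Sum>u<n. \<Sum>s\<le>j. \<Sum>w<n. T s u * T (j - s) w * h u w)"
      by (rule sum.swap)
    also have "\<dots> = (\<Sum>u<n. \<Sum>w<n. \<Sum>s\<le>j. T s u * T (j - s) w * h u w)"
      by (rule sum.cong[OF refl], rule sum.swap)
    finally show "(\<Sum>s\<le>j. \<Sum>u<n. \<Sum>w<n. T s u * T (j - s) w * h u w) = (\<Sum>u<n. \<Sum>w<n. (\<Sum>s\<le>j. T s u * T (j - s) w) * h u w)"
      by (simp add: sum_distrib_right)
  qed
  also have "\<dots> = (\<Sum>j<n. b j * (\<Sum>u<n. \<Sum>w<n. if u + w < n then T j (u + w) * h u w else 0))"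
    by (intro sum.cong refl arg_cong2[where f="(*)"]) (simp add: Tc)
  also have "\<dots> = (\<Sum>j<n. b j * (\<Sum>q<n. \<Sum>u\<le>q. T j q * h u (q - u)))"
    by (subst tri) simp
  also have "\<dots> = (\<Sum>j<n. \<Sum>q<n. b j * T j q * (\<Sum>u\<le>q. h u (q - u)))"
    by (simp add: sum_distrib_left mult_ac)
  also have "\<dots> = (\<Sum>q<n. \<Sum>j<n. b j * T j q * (\<Sum>u\<le>q. h u (q - u)))"
    by (rule sum.swap)
  also have "\<dots> = sweedler n H (lin n T b) k"
    unfolding sweedler_def h_def by (simp add: lin_def sum_distrib_right)
  finally show ?thesis .
qed

lemma sweedler_lin:
  assumes k: "k < n"
  shows "sweedler n (\<lambda>x y. lin n S (G x y)) b k = lin n S (sweedler n G b) k"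
proof -
  have "sweedler n (\<lambda>x y. lin n S (G x y)) b k = (\<Sum>j<n. \<Sum>s\<le>j. \<Sum>v<n. b j * (G (bx s) (bx (j - s)) v * S v k))"
    using k by (simp add: sweedler_def lin_def sum_distrib_left)
  also have "\<dots> = (\<Sum>v<n. \<Sum>j<n. \<Sum>s\<le>j. b j * (G (bx s) (bx (j - s)) v * S v k))"
  proof -
    have "(\<Sum>j<n. \<Sum>s\<le>j. \<Sum>v<n. b j * (G (bx s) (bx (j - s)) v * S v k)) = (\<Sum>j<n. \<Sum>v<n. \<Sum>s\<le>j. b j * (G (bx s) (bx (j - s)) v * S v k))"
      by (rule sum.cong[OF refl], rule sum.swap)
    also have "\<dots> = (\<Sum>v<n. \<Sum>j<n. \<Sum>s\<le>j. b j * (G (bx s) (bx (j - s)) v * S v k))"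
      by (rule sum.swap)
    finally show ?thesis .
  qed
  also have "\<dots> = lin n S (sweedler n G b) k"
    using k by (simp add: sweedler_def lin_def sum_distrib_left sum_distrib_right mult_ac)
  finally show ?thesis .
qed

lemma app_conj:
  "app n (cnj n T S f) a b = lin n S (app n f (lin n T a) (lin n T b))"
proof
  fix k
  show "app n (cnj n T S f) a b k = lin n S (app n f (lin n T a) (lin n T b)) k"
  proof (cases "k < n")
    case k: True
    have "lin n S (app n f (lin n T a) (lin n T b)) k
       = (\<Sum>r<n. (\<Sum>u<n. \<Sum>w<n. (\<Sum>i<n. a i * T i u) * (\<Sum>j<n. b j * T j w) * f u w r) * S r k)"
      using k by (simp add: lin_def app_def)
    also have "\<dots> = (\<Sum>r<n. (\<Sum>u<n. \<Sum>w<n. \<Sum>i<n. \<Sum>j<n. a i * b j * (T i u * T j w * f u w r)) * S r k)"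
    proof -
      have "(\<Sum>u<n. \<Sum>w<n. (\<Sum>i<n. a i * T i u) * (\<Sum>j<n. b j * T j w) * f u w r)
         = (\<Sum>u<n. \<Sum>w<n. \<Sum>i<n. \<Sum>j<n. a i * b j * (T i u * T j w * f u w r))" for r
        unfolding prod3 by (intro sum.cong refl) (simp add: mult_ac)
      then show ?thesis by simp
    qed
    also have "\<dots> = (\<Sum>r<n. (\<Sum>i<n. \<Sum>j<n. \<Sum>u<n. \<Sum>w<n. a i * b j * (T i u * T j w * f u w r)) * S r k)"
      by (subst swap4) (rule refl)
    also have "\<dots> = (\<Sum>r<n. \<Sum>i<n. \<Sum>j<n. a i * b j * ((\<Sum>u<n. \<Sum>w<n. T i u * T j w * f u w r) * S r k))"
      by (simp add: sum_distrib_left sum_distrib_right mult_ac)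
    also have "\<dots> = (\<Sum>i<n. \<Sum>j<n. \<Sum>r<n. a i * b j * ((\<Sum>u<n. \<Sum>w<n. T i u * T j w * f u w r) * S r k))"
    proof -
      have "(\<Sum>r<n. \<Sum>i<n. \<Sum>j<n. a i * b j * ((\<Sum>u<n. \<Sum>w<n. T i u * T j w * f u w r) * S r k))
          = (\<Sum>i<n. \<Sum>r<n. \<Sum>j<n. a i * b j * ((\<Sum>u<n. \<Sum>w<n. T i u * T j w * f u w r) * S r k))"
        by (rule sum.swap)
      also have "\<dots> = (\<Sum>i<n. \<Sum>j<n. \<Sum>r<n. a i * b j * ((\<Sum>u<n. \<Sum>w<n. T i u * T j w * f u w r) * S r k))"
        by (rule sum.cong[OF refl], rule sum.swap)
      finally show ?thesis .
    qed
    also have "\<dots> = app n (cnj n T S f) a b k"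
      using k by (simp add: app_def cnj_def sum_distrib_left)
    finally show ?thesis by simp
  next
    case False then show ?thesis by (simp add: app_def lin_def)
  qed
qed

lemma lin_lin:
  assumes "\<forall>u<n. \<forall>k<n. (\<Sum>v<n. S u v * T v k) = (if u = k then 1 else 0)"
  shows "lin n T (lin n S x) = (\<lambda>k. if k < n then x k else 0)"
proof
  fix k
  show "lin n T (lin n S x) k = (if k < n then x k else 0)"
  proof (cases "k < n")
    case True
    have "lin n T (lin n S x) k = (\<Sum>v<n. (\<Sum>u<n. x u * S u v) * T v k)"
      using True by (simp add: lin_def)
    also have "\<dots> = (\<Sum>v<n. \<Sum>u<n. x u * (S u v * T v k))"
      by (simp add: sum_distrib_left sum_distrib_right mult_ac)
    also have "\<dots> = (\<Sum>u<n. \<Sum>v<n. x u * (S u v * T v k))"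
      by (rule sum.swap)
    also have "\<dots> = (\<Sum>u<n. x u * (\<Sum>v<n. S u v * T v k))"
      by (simp add: sum_distrib_left)
    also have "\<dots> = (\<Sum>u<n. if u = k then x k else 0)"
      using True assms by (intro sum.cong refl) auto
    finally show ?thesis using True by simp
  qed (simp add: lin_def)
qed

lemma app_restrict1: "app n f (\<lambda>k. if k < n then x k else 0) y = app n f x y"
  unfolding app_def by (intro ext if_cong refl sum.cong) auto

lemma app_restrict2: "app n f x (\<lambda>k. if k < n then y k else 0) = app n f x y"
  unfolding app_def by (intro ext if_cong refl sum.cong) auto



definition Pg :: "nat \<Rightarrow> (nat \<Rightarrow> 'a::field_char_0) \<Rightarrow> 'a bilin" where
  "Pg m \<sigma> = (\<lambda>i j k. if i = k then cc m (\<sigma> k) j else 0)"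

lemma app_Pg: "k < n \<Longrightarrow> app n (Pg m \<sigma>) x y k = x k * (\<Sum>j<n. y j * cc m (\<sigma> k) j)"
proof -
  assume k: "k < n"
  have "app n (Pg m \<sigma>) x y k = (\<Sum>i<n. \<Sum>j<n. x i * y j * (if i = k then cc m (\<sigma> k) j else 0))"
    using k by (simp add: app_def Pg_def)
  also have "\<dots> = (\<Sum>i<n. if i = k then (\<Sum>j<n. x k * y j * cc m (\<sigma> k) j) else 0)"
    by (rule sum.cong) auto
  also have "\<dots> = x k * (\<Sum>j<n. y j * cc m (\<sigma> k) j)"
    using k by (simp add: sum_distrib_left mult.assoc)
  finally show ?thesis .
qed

lemma app_Pg_bx: "k < n \<Longrightarrow> s < n \<Longrightarrow> app n (Pg m \<sigma>) x (bx s) k = x k * cc m (\<sigma> k) s"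
  by (simp add: app_Pg bx_sum1)

lemma coalg_Pg:
  assumes m: "m > 0" and s0: "\<sigma> 0 = 0" and sadd: "\<And>s t. \<sigma> (s + t) = \<sigma> s + \<sigma> t"
  shows "coalg_mor n (Pg m \<sigma>)"
  unfolding coalg_mor_def
proof (intro conjI allI impI)
  fix i j s t assume ijst: "i < n" "j < n" "s < n" "t < n"
  have "(\<Sum>a\<le>i. \<Sum>c\<le>j. Pg m \<sigma> a c s * Pg m \<sigma> (i - a) (j - c) t)
      = (\<Sum>a\<le>i. if a = s then (if i - s = t then (\<Sum>c\<le>j. cc m (\<sigma> s) c * cc m (\<sigma> t) (j - c)) else 0) else 0)"
    unfolding Pg_def by (intro sum.cong refl) auto
  also have "\<dots> = (if s \<le> i \<and> i - s = t then cc m (\<sigma> s + \<sigma> t) j else 0)"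
    using m by (simp add: cc_vdm)
  also have "\<dots> = (if s + t < n then Pg m \<sigma> i j (s + t) else 0)"
    using ijst by (auto simp: Pg_def sadd)
  finally show "(if s + t < n then Pg m \<sigma> i j (s + t) else 0) = (\<Sum>a\<le>i. \<Sum>c\<le>j. Pg m \<sigma> a c s * Pg m \<sigma> (i - a) (j - c) t)" by simp
next
  fix i j assume "i < n" "j < n"
  then show "Pg m \<sigma> i j 0 = (if i = 0 \<and> j = 0 then 1 else 0)" using m s0 by (simp add: Pg_def)
qed

lemma sweedler_sym: "sweedler n F b = sweedler n (\<lambda>x y. F y x) b"
  unfolding sweedler_def
  apply (rule ext)
  apply (rule sum.cong[OF refl])
  apply (rule arg_cong2[where f="(*)"], rule refl)
  subgoal for k j
    by (rule sum.reindex_bij_witness[where i="\<lambda>s. j - s" and j="\<lambda>s. j - s"]) auto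
  done

lemma sw_gen:
  fixes A B C :: "'a::field_char_0 elt"
  assumes m: "m > 0" and k: "k < n"
  shows "sweedler n (\<lambda>x y. app n (Pg m of_nat) (app n (Pg m of_nat) A x) (app n (Pg m of_nat) C y)) B k
    = A k * (\<Sum>j<n. \<Sum>w<n. B j * C w * (cc m (of_nat k) w * cc m (of_nat k + of_nat w) j))"
proof -
  let ?P = "Pg m (of_nat :: nat \<Rightarrow> 'a)"
  have "sweedler n (\<lambda>x y. app n ?P (app n ?P A x) (app n ?P C y)) B k
      = (\<Sum>j<n. B j * (\<Sum>s\<le>j. A k * cc m (of_nat k) s * (\<Sum>w<n. C w * cc m (of_nat w) (j - s) * cc m (of_nat k) w)))"
    unfolding sweedler_def using k
    by (intro sum.cong refl arg_cong2[where f="(*)"]) (simp add: app_Pg app_Pg_bx bx_sum1)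
  also have "\<dots> = A k * (\<Sum>j<n. \<Sum>w<n. B j * C w * cc m (of_nat k) w * (\<Sum>s\<le>j. cc m (of_nat k) s * cc m (of_nat w) (j - s)))"
  proof -
    have "(\<Sum>s\<le>j. A k * cc m (of_nat k) s * (\<Sum>w<n. C w * cc m (of_nat w) (j - s) * cc m (of_nat k) w))
        = (\<Sum>w<n. \<Sum>s\<le>j. A k * cc m (of_nat k) s * (C w * cc m (of_nat w) (j - s) * cc m (of_nat k) w))" for j
      by (simp add: sum_distrib_left) (rule sum.swap)
    then show ?thesis
      by (simp add: sum_distrib_left sum_distrib_right mult_ac)
  qed
  also have "\<dots> = A k * (\<Sum>j<n. \<Sum>w<n. B j * C w * (cc m (of_nat k) w * cc m (of_nat k + of_nat w) j))"
    using m by (simp add: cc_vdm mult_ac)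
  finally show ?thesis .
qed

lemma cycle_P0:
  fixes A B C :: "'a::field_char_0 elt"
  assumes m: "m > 0" and k: "k < n"
  shows "sweedler n (\<lambda>x y. app n (Pg m of_nat) (app n (Pg m of_nat) A x) (app n (Pg m of_nat) C y)) B k
       = sweedler n (\<lambda>x y. app n (Pg m of_nat) (app n (Pg m of_nat) A y) (app n (Pg m of_nat) B x)) C k"
proof -
  have "sweedler n (\<lambda>x y. app n (Pg m of_nat) (app n (Pg m of_nat) A y) (app n (Pg m of_nat) B x)) C k
     = sweedler n (\<lambda>x y. app n (Pg m of_nat) (app n (Pg m of_nat) A x) (app n (Pg m of_nat) B y)) C k"
    by (subst sweedler_sym) simp
  also have "\<dots> = A k * (\<Sum>j<n. \<Sum>w<n. C j * B w * (cc m (of_nat k) w * cc m (of_nat k + of_nat w) j))"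
    by (rule sw_gen[OF m k])
  also have "\<dots> = A k * (\<Sum>w<n. \<Sum>j<n. C j * B w * (cc m (of_nat k) w * cc m (of_nat k + of_nat w) j))"
    by (subst sum.swap) (rule refl)
  also have "\<dots> = A k * (\<Sum>j<n. \<Sum>w<n. B j * C w * (cc m (of_nat k) w * cc m (of_nat k + of_nat w) j))"
  proof -
    have h: "C j * B w * (cc m (of_nat k) w * cc m (of_nat k + of_nat w) j)
        = B w * C j * (cc m (of_nat k) j * cc m (of_nat k + of_nat j) w)" for j w
      by (subst cc_sym[OF m]) (simp add: ac_simps)
    show ?thesis by (simp only: h)
  qed
  also have "\<dots> = sweedler n (\<lambda>x y. app n (Pg m of_nat) (app n (Pg m of_nat) A x) (app n (Pg m of_nat) C y)) B k"
    by (rule sw_gen[OF m k, symmetric])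
  finally show ?thesis by simp
qed

lemma magma_P0:
  fixes A B :: "'a::field_char_0 elt"
  assumes m: "m > 0" and k: "k < n" and s: "\<sigma>1 k + \<sigma>2 k = 0"
  shows "sweedler n (\<lambda>x y. app n (Pg m \<sigma>1) (app n (Pg m \<sigma>2) A x) y) B k = B 0 * A k"
proof -
  have "sweedler n (\<lambda>x y. app n (Pg m \<sigma>1) (app n (Pg m \<sigma>2) A x) y) B k
     = (\<Sum>j<n. B j * (A k * (\<Sum>s\<le>j. cc m (\<sigma>2 k) s * cc m (\<sigma>1 k) (j - s))))"
    unfolding sweedler_def using k
    by (intro sum.cong refl arg_cong2[where f="(*)"]) (simp add: app_Pg_bx sum_distrib_left mult_ac)
  also have "\<dots> = (\<Sum>j<n. if j = 0 then B 0 * A k else 0)"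
    using m s by (intro sum.cong refl) (simp add: cc_vdm add.commute)
  also have "\<dots> = B 0 * A k" using k by simp
  finally show ?thesis .
qed


unbundle fps_syntax



definition Mt :: "'a::comm_ring_1 fps \<Rightarrow> nat \<Rightarrow> nat \<Rightarrow> 'a" where
  "Mt \<phi> j k = (\<phi> ^ k) $ j"

lemma pow_low: "\<phi> $ 0 = 0 \<Longrightarrow> q < k \<Longrightarrow> (\<phi> ^ k) $ q = (0::'a::idom)"
  using startsby_zero_power_prefix[of \<phi> k] by blast

lemma cmor_Mt:
  fixes \<phi> :: "'a::idom fps"
  assumes p0: "\<phi> $ 0 = 0"
  shows "cmor n (Mt \<phi>)"
  unfolding cmor_def
proof (intro conjI allI impI)
  fix q s t assume qst: "q < n" "s < n" "t < n"
  have "(\<Sum>r\<le>q. Mt \<phi> r s * Mt \<phi> (q - r) t) = (\<phi> ^ s * \<phi> ^ t) $ q"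
    by (simp add: Mt_def fps_mult_nth atLeast0AtMost)
  also have "\<dots> = (\<phi> ^ (s + t)) $ q" by (simp add: power_add)
  also have "\<dots> = (if s + t < n then Mt \<phi> q (s + t) else 0)"
    using qst pow_low[OF p0, of q "s + t"] by (auto simp: Mt_def)
  finally show "(\<Sum>r\<le>q. Mt \<phi> r s * Mt \<phi> (q - r) t) = (if s + t < n then Mt \<phi> q (s + t) else 0)" .
next
  fix j assume "j < n"
  show "Mt \<phi> j 0 = (if j = 0 then 1 else 0)" by (simp add: Mt_def)
qed

lemma inv_Mt:
  fixes \<phi> \<psi> :: "'a::idom fps"
  assumes p0: "\<phi> $ 0 = 0" and q0: "\<psi> $ 0 = 0" and comp: "\<phi> oo \<psi> = fps_X"
  shows "\<forall>u<n. \<forall>k<n. (\<Sum>v<n. Mt \<psi> u v * Mt \<phi> v k) = (if u = k then 1 else 0)"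
proof (intro allI impI)
  fix u k assume uk: "u < n" "k < n"
  have "(\<Sum>v<n. Mt \<psi> u v * Mt \<phi> v k) = (\<Sum>v\<in>{0..u}. (\<phi> ^ k) $ v * (\<psi> ^ v) $ u)"
  proof (rule sum.mono_neutral_cong_right)
    show "\<forall>i\<in>{..<n} - {0..u}. Mt \<psi> u i * Mt \<phi> i k = 0"
      using pow_low[OF q0] by (auto simp: Mt_def)
  qed (use uk in \<open>auto simp: Mt_def\<close>)
  also have "\<dots> = ((\<phi> ^ k) oo \<psi>) $ u" by (simp add: fps_compose_nth)
  also have "\<dots> = ((\<phi> oo \<psi>) ^ k) $ u" by (simp add: fps_compose_power[OF q0])
  also have "\<dots> = (if u = k then 1 else 0)" by (simp add: comp)
  finally show "(\<Sum>v<n. Mt \<psi> u v * Mt \<phi> v k) = (if u = k then 1 else 0)" .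
qed

lemma G_pow:
  assumes m: "m > 0"
  shows "(Abs_fps (cc m (1::'a::field_char_0))) ^ s = Abs_fps (cc m (of_nat s))"
proof (induction s)
  case 0
  show ?case using m by (simp add: fps_eq_iff)
next
  case (Suc s)
  have "(Abs_fps (cc m (1::'a))) ^ Suc s = Abs_fps (cc m 1) * Abs_fps (cc m (of_nat s))"
    by (simp add: Suc)
  also have "\<dots> = Abs_fps (cc m (of_nat (Suc s)))"
  proof (rule fps_ext)
    fix j
    have "(Abs_fps (cc m (1::'a)) * Abs_fps (cc m (of_nat s))) $ j = (\<Sum>i\<le>j. cc m 1 i * cc m (of_nat s) (j - i))"
      by (simp add: fps_mult_nth atLeast0AtMost)
    also have "\<dots> = cc m (1 + of_nat s) j" by (rule cc_vdm[OF m])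
    finally show "(Abs_fps (cc m (1::'a)) * Abs_fps (cc m (of_nat s))) $ j = Abs_fps (cc m (of_nat (Suc s))) $ j"
      by simp
  qed
  finally show ?case .
qed

lemma cc_mm:
  assumes m: "m > 0"
  shows "cc m (of_nat m :: 'a::field_char_0) j = (if m dvd j then of_nat m ^ (j div m) else 0)"
  using m by (simp add: cc_def dd_poch pochhammer_fact[symmetric])

lemma G_m:
  assumes m: "m > 0"
  shows "(Abs_fps (cc m (1::'a::field_char_0))) ^ m - fps_const (of_nat m) * (fps_X ^ m * (Abs_fps (cc m 1)) ^ m) = 1"
proof (rule fps_ext)
  fix j
  show "((Abs_fps (cc m (1::'a))) ^ m - fps_const (of_nat m) * (fps_X ^ m * (Abs_fps (cc m 1)) ^ m)) $ j = 1 $ j"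
  proof (cases "j < m")
    case True
    then show ?thesis using m by (auto simp: G_pow fps_X_power_mult_nth cc_mm dest: dvd_imp_le)
  next
    case False
    then have d: "m dvd (j - m) \<longleftrightarrow> m dvd j" by (simp add: dvd_minus_self)
    have q: "j div m = Suc ((j - m) div m)" using False m by (simp add: le_div_geq)
    show ?thesis using m False by (simp add: G_pow fps_X_power_mult_nth cc_mm d q)
  qed
qed

definition Pser :: "nat \<Rightarrow> (nat \<Rightarrow> 'a::field_char_0) \<Rightarrow> 'a fps" where
  "Pser v0 pv = Abs_fps (\<lambda>v. if v = 0 then 1 else if v < v0 then 0 else pv v)"

lemma exists_phi:
  fixes pv :: "nat \<Rightarrow> 'a::field_char_0"
  assumes m: "m > 0" and pm: "pv m = 1"
  shows "\<exists>\<phi>. \<phi> $ 0 = 0 \<and> \<phi> $ 1 = 1 \<and> Abs_fps (cc m 1) oo \<phi> = Pser m pv"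
proof -
  define P where "P = Pser m pv"
  define Q where "Q = Abs_fps (\<lambda>i. P $ (i + m))"
  have P0: "P $ 0 = 1" by (simp add: P_def Pser_def)
  have Q0: "Q $ 0 = 1" using m pm by (simp add: Q_def P_def Pser_def)
  have hPQ: "P - 1 = fps_X ^ m * Q"
  proof (rule fps_ext)
    fix j show "(P - 1) $ j = (fps_X ^ m * Q) $ j"
      using m by (auto simp: fps_X_power_mult_nth Q_def P_def Pser_def)
  qed
  define W where "W = Q * (\<Sum>i<m. P ^ i)"
  have hW: "P ^ m - 1 = fps_X ^ m * W"
    unfolding W_def power_diff_1_eq hPQ by (simp add: mult_ac)
  have W0: "W $ 0 = of_nat m"
    by (simp add: W_def Q0 fps_sum_nth fps_power_zeroth P0)
  have Pm0: "(P ^ m) $ 0 = 1" by (simp add: fps_power_zeroth P0)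
  define w where "w = fps_const (1 / of_nat m) * W * inverse (P ^ m)"
  have w0: "w $ 0 = 1" using m by (simp add: w_def W0 Pm0 fps_inverse_def)
  obtain k where k: "m = Suc k" using m by (cases m) auto
  define \<rho> where "\<rho> = fps_radical (\<lambda>k x. 1) m w"
  have \<rho>m: "\<rho> ^ m = w"
    unfolding \<rho>_def k using power_radical[of w "\<lambda>k x. 1" k] w0 by simp
  have \<rho>0: "\<rho> $ 0 = 1" using m by (simp add: \<rho>_def)
  define \<phi> where "\<phi> = fps_X * \<rho>"
  have \<phi>0: "\<phi> $ 0 = 0" by (simp add: \<phi>_def)
  have \<phi>1: "\<phi> $ 1 = 1" by (simp add: \<phi>_def \<rho>0)
  have inv1: "P ^ m * inverse (P ^ m) = 1" using Pm0 by (intro inverse_mult_eq_1') simp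
  have inv2: "inverse (P ^ m) * P ^ m = 1" using Pm0 by (intro inverse_mult_eq_1) simp
  have cm: "fps_const (of_nat m :: 'a) * fps_const (1 / of_nat m) = 1" using m by simp
  have key: "1 - fps_const (of_nat m) * \<phi> ^ m = inverse (P ^ m)"
  proof -
    have "fps_const (of_nat m) * \<phi> ^ m = (fps_const (of_nat m) * fps_const (1 / of_nat m)) * (fps_X ^ m * W) * inverse (P ^ m)"
      by (simp add: \<phi>_def power_mult_distrib \<rho>m w_def mult_ac)
    also have "\<dots> = (P ^ m - 1) * inverse (P ^ m)" by (simp only: cm hW mult_1_left)
    also have "\<dots> = 1 - inverse (P ^ m)" by (simp add: algebra_simps inv1)
    finally show ?thesis by simp
  qed
  define G where "G = Abs_fps (cc m (1::'a))"
  define H where "H = G oo \<phi>"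
  have "(G ^ m - fps_const (of_nat m) * (fps_X ^ m * G ^ m)) oo \<phi> = 1"
    unfolding G_def G_m[OF m] by simp
  moreover have xm: "fps_X ^ m oo \<phi> = \<phi> ^ m"
    by (simp add: fps_compose_power[OF \<phi>0, symmetric] \<phi>0)
  ultimately have "H ^ m - fps_const (of_nat m) * (\<phi> ^ m * H ^ m) = 1"
    by (simp add: H_def fps_compose_sub_distrib fps_compose_mult_distrib[OF \<phi>0] fps_compose_power[OF \<phi>0])
  then have "H ^ m * (1 - fps_const (of_nat m) * \<phi> ^ m) = 1"
    by (simp add: algebra_simps)
  then have "H ^ m * inverse (P ^ m) = 1" by (simp add: key)
  then have "H ^ m * inverse (P ^ m) * P ^ m = P ^ m" by simp
  then have Hm: "H ^ m = P ^ m" by (simp add: mult.assoc inv2)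
  have H0: "H $ 0 = 1" by (simp add: H_def G_def)
  have r1: "H = fps_radical (\<lambda>k x. 1) (Suc k) (P ^ m)"
    using radical_unique[of "\<lambda>k x. 1" k "P ^ m" H] Hm H0 Pm0 k by simp
  have r2: "P = fps_radical (\<lambda>k x. 1) (Suc k) (P ^ m)"
    using radical_unique[of "\<lambda>k x. 1" k "P ^ m" P] P0 Pm0 k by simp
  have "H = P" using r1 r2 by simp
  then show ?thesis using \<phi>0 \<phi>1 unfolding H_def G_def P_def by blast
qed




lemma lin_cong: "(\<And>v. v < n \<Longrightarrow> Z v = Z' v) \<Longrightarrow> lin n S Z = lin n S Z'"
  unfolding lin_def by (intro ext if_cong refl sum.cong) auto

lemma lin_scale: "lin n S (\<lambda>v. c * Z v) k = c * lin n S Z k"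
  by (simp add: lin_def sum_distrib_left mult_ac)

lemma lin_T0: "cmor n T \<Longrightarrow> 0 < n \<Longrightarrow> lin n T b 0 = b 0"
proof -
  assume T: "cmor n T" and n: "0 < n"
  have "lin n T b 0 = (\<Sum>v<n. b v * T v 0)" using n by (simp add: lin_def)
  also have "\<dots> = (\<Sum>v<n. if v = 0 then b 0 else 0)"
    by (rule sum.cong) (use T in \<open>auto simp: cmor_def\<close>)
  finally have "lin n T b 0 = (\<Sum>v<n. if v = 0 then b 0 else 0)" .
  then show ?thesis using n by simp
qed

lemma bil_comp2: "bil n (\<lambda>x y. app n f (app n g A x) (app n h C y))"
  by (rule bil_app[OF lnr_app2 lnr_app2])

lemma bil_comp2s: "bil n (\<lambda>x y. app n f (app n g A y) (app n h C x))"
  by (rule bil_swap[where H="\<lambda>x y. app n f (app n g A x) (app n h C y)", OF bil_comp2])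

lemma bil_comp1: "bil n (\<lambda>x y. app n f (app n g A x) y)"
  using bil_app[where G="app n g A" and G'="\<lambda>x. x" and f=f and n=n, OF lnr_app2 lnr_id] by simp

locale cset =
  fixes n m :: nat and T S :: "nat \<Rightarrow> nat \<Rightarrow> 'a::field_char_0"
  assumes n: "0 < n" and m: "0 < m" and T: "cmor n T" and S: "cmor n S"
    and TS: "\<forall>u<n. \<forall>k<n. (\<Sum>v<n. S u v * T v k) = (if u = k then 1 else 0)"
    and ST: "\<forall>u<n. \<forall>k<n. (\<Sum>v<n. T u v * S v k) = (if u = k then 1 else 0)"
begin

lemma LL: "lin n T (lin n S x) = (\<lambda>k. if k < n then x k else 0)"
  by (rule lin_lin[OF TS])

lemma LL': "lin n S (lin n T x) = (\<lambda>k. if k < n then x k else 0)"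
  by (rule lin_lin[OF ST])

lemma magma_conj:
  assumes s: "\<And>k. \<sigma>1 k + \<sigma>2 k = 0" and k: "k < n"
  shows "sweedler n (\<lambda>b1 b2. app n (cnj n T S (Pg m \<sigma>1)) (app n (cnj n T S (Pg m \<sigma>2)) a b1) b2) b k = b 0 * a k"
proof -
  define H where "H = (\<lambda>x y. app n (Pg m \<sigma>1) (app n (Pg m \<sigma>2) (lin n T a) x) y)"
  have bH: "bil n H" unfolding H_def by (rule bil_comp1)
  have "sweedler n (\<lambda>b1 b2. app n (cnj n T S (Pg m \<sigma>1)) (app n (cnj n T S (Pg m \<sigma>2)) a b1) b2) b k
      = sweedler n (\<lambda>b1 b2. lin n S (H (lin n T b1) (lin n T b2))) b k"
    by (simp add: app_conj LL app_restrict1 app_restrict2 H_def)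
  also have "\<dots> = lin n S (sweedler n (\<lambda>b1 b2. H (lin n T b1) (lin n T b2)) b) k"
    by (rule sweedler_lin[OF k])
  also have "\<dots> = lin n S (\<lambda>v. lin n T b 0 * lin n T a v) k"
  proof (rule arg_cong[where f="\<lambda>z. z k"], rule lin_cong)
    fix v assume v: "v < n"
    have "sweedler n (\<lambda>b1 b2. H (lin n T b1) (lin n T b2)) b v = sweedler n H (lin n T b) v"
      by (rule sweedler_T[OF T bH v])
    also have "\<dots> = lin n T b 0 * lin n T a v"
      unfolding H_def by (rule magma_P0[OF m v s])
    finally show "sweedler n (\<lambda>b1 b2. H (lin n T b1) (lin n T b2)) b v = lin n T b 0 * lin n T a v" .
  qed
  also have "\<dots> = b 0 * a k"
    using k by (simp add: lin_scale LL' lin_T0[OF T n])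
  finally show ?thesis .
qed

lemma cycle_conj:
  assumes k: "k < n"
  shows "sweedler n (\<lambda>b1 b2. app n (cnj n T S (Pg m of_nat)) (app n (cnj n T S (Pg m of_nat)) a b1) (app n (cnj n T S (Pg m of_nat)) c b2)) b k
       = sweedler n (\<lambda>c1 c2. app n (cnj n T S (Pg m of_nat)) (app n (cnj n T S (Pg m of_nat)) a c2) (app n (cnj n T S (Pg m of_nat)) b c1)) c k"
proof -
  let ?P = "Pg m (of_nat :: nat \<Rightarrow> 'a)"
  define H1 where "H1 = (\<lambda>x y. app n ?P (app n ?P (lin n T a) x) (app n ?P (lin n T c) y))"
  define H2 where "H2 = (\<lambda>x y. app n ?P (app n ?P (lin n T a) y) (app n ?P (lin n T b) x))"
  have b1: "bil n H1" unfolding H1_def by (rule bil_comp2)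
  have b2: "bil n H2" unfolding H2_def by (rule bil_comp2s)
  have "sweedler n (\<lambda>b1 b2. app n (cnj n T S ?P) (app n (cnj n T S ?P) a b1) (app n (cnj n T S ?P) c b2)) b k
      = sweedler n (\<lambda>b1 b2. lin n S (H1 (lin n T b1) (lin n T b2))) b k"
    by (simp add: app_conj LL app_restrict1 app_restrict2 H1_def)
  also have "\<dots> = lin n S (sweedler n (\<lambda>b1 b2. H1 (lin n T b1) (lin n T b2)) b) k"
    by (rule sweedler_lin[OF k])
  also have "\<dots> = lin n S (sweedler n (\<lambda>b1 b2. H2 (lin n T b1) (lin n T b2)) c) k"
  proof (rule arg_cong[where f="\<lambda>z. z k"], rule lin_cong)
    fix v assume v: "v < n"
    have "sweedler n (\<lambda>b1 b2. H1 (lin n T b1) (lin n T b2)) b v = sweedler n H1 (lin n T b) v"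
      by (rule sweedler_T[OF T b1 v])
    also have "\<dots> = sweedler n H2 (lin n T c) v"
      unfolding H1_def H2_def by (rule cycle_P0[OF m v])
    also have "\<dots> = sweedler n (\<lambda>b1 b2. H2 (lin n T b1) (lin n T b2)) c v"
      by (rule sweedler_T[OF T b2 v, symmetric])
    finally show "sweedler n (\<lambda>b1 b2. H1 (lin n T b1) (lin n T b2)) b v = sweedler n (\<lambda>b1 b2. H2 (lin n T b1) (lin n T b2)) c v" .
  qed
  also have "\<dots> = sweedler n (\<lambda>b1 b2. lin n S (H2 (lin n T b1) (lin n T b2))) c k"
    by (rule sweedler_lin[OF k, symmetric])
  also have "\<dots> = sweedler n (\<lambda>c1 c2. app n (cnj n T S ?P) (app n (cnj n T S ?P) a c2) (app n (cnj n T S ?P) b c1)) c k"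
    by (simp add: app_conj LL app_restrict1 app_restrict2 H2_def)
  finally show ?thesis .
qed

lemma is_cycle: "cycle_coalgebra n (cnj n T S (Pg m of_nat))"
proof -
  let ?p = "cnj n T S (Pg m (of_nat :: nat \<Rightarrow> 'a))"
  let ?u = "cnj n T S (Pg m (\<lambda>k. - (of_nat k :: 'a)))"
  have cp: "coalg_mor n ?p" by (rule conj_mor[OF T S coalg_Pg[OF m]]) simp_all
  have cu: "coalg_mor n ?u" by (rule conj_mor[OF T S coalg_Pg[OF m]]) simp_all
  have e1: "eqC n (sweedler n (\<lambda>b1 b2. app n ?p (app n ?u a b1) b2) b) (smul (cou b) a)" for a b
    unfolding eqC_def smul_def cou_def by (auto intro: magma_conj)
  have e2: "eqC n (sweedler n (\<lambda>b1 b2. app n ?u (app n ?p a b1) b2) b) (smul (cou b) a)" for a b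
    unfolding eqC_def smul_def cou_def by (auto intro: magma_conj)
  have cyc: "eqC n (sweedler n (\<lambda>b1 b2. app n ?p (app n ?p a b1) (app n ?p c b2)) b)
              (sweedler n (\<lambda>c1 c2. app n ?p (app n ?p a c2) (app n ?p b c1)) c)" for a b c
    unfolding eqC_def using cycle_conj by blast
  show ?thesis
    unfolding cycle_coalgebra_def regular_q_cycle_def regular_q_magma_def
  proof (intro conjI cp allI exI[of _ ?u])
    show "coalg_mor n ?u" by (rule cu)
    show "coalg_mor n ?u" by (rule cu)
    fix a b
    show "eqC n (sweedler n (\<lambda>b1 b2. app n ?p (app n ?u a b1) b2) b) (smul (cou b) a)" by (rule e1)
    show "eqC n (sweedler n (\<lambda>b1 b2. app n ?u (app n ?p a b1) b2) b) (smul (cou b) a)" by (rule e2)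
    show "eqC n (sweedler n (\<lambda>b1 b2. app n ?u (app n ?p a b2) b1) b) (smul (cou b) a)"
      using e2 by (subst sweedler_sym) simp
    show "eqC n (sweedler n (\<lambda>b1 b2. app n ?p (app n ?u a b2) b1) b) (smul (cou b) a)"
      using e1 by (subst sweedler_sym) simp
  next
    fix a b c
    show "eqC n (sweedler n (\<lambda>b1 b2. app n ?p (app n ?p a b1) (app n ?p c b2)) b)
              (sweedler n (\<lambda>c1 c2. app n ?p (app n ?p a c2) (app n ?p b c1)) c)" by (rule cyc)
    show "eqC n (sweedler n (\<lambda>b1 b2. app n ?p (app n ?p a b1) (app n ?p c b2)) b)
              (sweedler n (\<lambda>c1 c2. app n ?p (app n ?p a c2) (app n ?p b c1)) c)" by (rule cyc)
    show "eqC n (sweedler n (\<lambda>b1 b2. app n ?p (app n ?p a b1) (app n ?p c b2)) b)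
              (sweedler n (\<lambda>c1 c2. app n ?p (app n ?p a c2) (app n ?p b c1)) c)" by (rule cyc)
  qed
qed

end

lemma pval:
  fixes \<phi> \<psi> :: "'a::field_char_0 fps"
  assumes p0: "\<phi> $ 0 = 0" and p1: "\<phi> $ 1 = 1" and q1: "\<psi> $ 1 = 1" and n: "1 < n" and v: "v < n"
  shows "cnj n (Mt \<phi>) (Mt \<psi>) (Pg m of_nat) 1 v 1 = (Abs_fps (cc m 1) oo \<phi>) $ v"
proof -
  have T1: "Mt \<phi> 1 u = (if u = 1 then 1 else 0)" for u
  proof -
    consider "u = 0" | "u = 1" | "u > 1" by linarith
    then show ?thesis
      using p1 by cases (auto simp: Mt_def pow_low[OF p0])
  qed
  have "cnj n (Mt \<phi>) (Mt \<psi>) (Pg m of_nat) 1 v 1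
      = (\<Sum>r<n. (\<Sum>u<n. \<Sum>w<n. Mt \<phi> 1 u * Mt \<phi> v w * Pg m of_nat u w r) * Mt \<psi> r 1)"
    by (simp add: cnj_def)
  also have "\<dots> = (\<Sum>r<n. (\<Sum>u<n. if u = 1 then (\<Sum>w<n. Mt \<phi> v w * Pg m of_nat 1 w r) else 0) * Mt \<psi> r 1)"
    using T1[unfolded One_nat_def] by (intro sum.cong refl arg_cong2[where f="(*)"]) simp
  also have "\<dots> = (\<Sum>r<n. (\<Sum>w<n. Mt \<phi> v w * Pg m of_nat 1 w r) * Mt \<psi> r 1)"
    using n by simp
  also have "\<dots> = (\<Sum>r<n. if r = 1 then (\<Sum>w<n. Mt \<phi> v w * cc m 1 w) * Mt \<psi> 1 1 else 0)"
    by (intro sum.cong refl) (auto simp: Pg_def)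
  also have "\<dots> = (\<Sum>w<n. Mt \<phi> v w * cc m 1 w)"
    using n q1 by (simp add: Mt_def)
  also have "\<dots> = (\<Sum>i\<in>{0..v}. cc m 1 i * (\<phi> ^ i) $ v)"
  proof (rule sum.mono_neutral_cong_right)
    show "\<forall>i\<in>{..<n} - {0..v}. Mt \<phi> v i * cc m 1 i = 0"
      using pow_low[OF p0] by (auto simp: Mt_def)
  qed (use v in \<open>auto simp: Mt_def\<close>)
  also have "\<dots> = (Abs_fps (cc m 1) oo \<phi>) $ v" by (simp add: fps_compose_nth)
  finally show ?thesis .
qed

theorem corollary3p3:
  fixes pv :: "nat \<Rightarrow> 'a::field_char_0" and n v0 :: nat
  assumes "alg_closed_field TYPE('a)"
    and "n \<ge> 2" and "1 \<le> v0" and "v0 < n" and "pv v0 = 1"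
  shows "\<exists>p :: 'a bilin. cycle_coalgebra n p \<and>
           (\<forall>v<v0. p 1 v 1 = (if v = 0 then 1 else 0)) \<and>
           (\<forall>v. v0 \<le> v \<and> v < n \<longrightarrow> p 1 v 1 = pv v)"
proof -
  have m: "0 < v0" and n1: "1 < n" and n0: "0 < n" using assms by auto
  obtain \<phi> :: "'a fps" where p0: "\<phi> $ 0 = 0" and p1: "\<phi> $ 1 = 1" and hG: "Abs_fps (cc v0 1) oo \<phi> = Pser v0 pv"
    using exists_phi[where m=v0 and pv=pv, OF m assms(5)] by blast
  define \<psi> where "\<psi> = fps_inv \<phi>"
  have q0: "\<psi> $ 0 = 0" by (simp add: \<psi>_def fps_inv_def)
  have p1': "\<phi> $ Suc 0 = 1" using p1 by simp
  have q1: "\<psi> $ 1 = 1" by (simp add: \<psi>_def fps_inv_def p0 p1')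
  have pq: "\<phi> oo \<psi> = fps_X" unfolding \<psi>_def by (rule fps_inv_right) (simp_all add: p0 p1')
  have qp: "\<psi> oo \<phi> = fps_X" unfolding \<psi>_def by (rule fps_inv) (simp_all add: p0 p1')
  interpret cset n v0 "Mt \<phi>" "Mt \<psi>"
  proof
    show "0 < n" by (rule n0)
    show "0 < v0" by (rule m)
    show "cmor n (Mt \<phi>)" by (rule cmor_Mt[OF p0])
    show "cmor n (Mt \<psi>)" by (rule cmor_Mt[OF q0])
    show "\<forall>u<n. \<forall>k<n. (\<Sum>v<n. Mt \<psi> u v * Mt \<phi> v k) = (if u = k then 1 else 0)"
      by (rule inv_Mt[OF p0 q0 pq])
    show "\<forall>u<n. \<forall>k<n. (\<Sum>v<n. Mt \<phi> u v * Mt \<psi> v k) = (if u = k then 1 else 0)"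
      by (rule inv_Mt[OF q0 p0 qp])
  qed
  let ?p = "cnj n (Mt \<phi>) (Mt \<psi>) (Pg v0 (of_nat :: nat \<Rightarrow> 'a))"
  have pv1: "?p 1 v 1 = Pser v0 pv $ v" if "v < n" for v
    using pval[OF p0 p1 q1 n1 that, of v0] hG by simp
  show ?thesis
  proof (intro exI[of _ ?p] conjI allI impI)
    show "cycle_coalgebra n ?p" by (rule is_cycle)
    fix v assume "v < v0"
    then show "?p 1 v 1 = (if v = 0 then 1 else 0)" using pv1[of v] assms by (simp add: Pser_def)
  next
    fix v assume "v0 \<le> v \<and> v < n"
    then show "?p 1 v 1 = pv v" using pv1[of v] m by (simp add: Pser_def)
  qed
qed


end
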